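(* Let $a,b,c$ be positive integers and $\vec k=(a,b,c)$. Every $\pi\in\mathcal D_{(a,b,c)}$ can be written uniquely as $$\pi=S^{a}W^{\ell_1}S^{b}W^{\ell_2}S^{c}W^{a+b+c-\ell_1-\ell_2}$$ with integers $\ell_1,\ell_2$ satisfying $0\le\ell_1\le a$, $0\le\ell_2$, $\ell_1+\ell_2\le a+b$ (here $W^{n}$ denotes $n$ consecutive letters $W$). Define $\theta$ on $\mathcal D_{(a,b,c)}$ by $$\theta(\pi)=\begin{cases} S^{a}W^{a-\ell_1}S^{b}W^{b-\ell_2}S^{c}W^{c+\ell_1+\ell_2}, & \text{if } \ell_2\le b,\\ S^{a}W^{a+b-\ell_1-\ell_2}S^{b}W^{\ell_2}S^{c}W^{c+\ell_1}, & \text{otherwise.}\end{cases}$$ Then $\theta$ is an involution on $\mathcal D_{(a,b,c)}$ satisfying $\mathrm{area}(\pi)=\mathrm{depth}(\theta(\pi))$ and $\mathrm{depth}(\pi)=\mathrm{area}(\theta(\pi))$ for all $\pi\in\mathcal D_{(a,b,c)}$.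
   Context: For $\vec k=(k_1,\dots,k_\ell)$ put $|\vec k|=\sum k_i$, $N=|\vec k|+\ell$. A $\vec k$-Dyck path is a word $\pi=\pi_1\cdots\pi_N$ containing the letters $S^{k_1},\dots,S^{k_\ell}$ exactly once each and in this order, together with $|\vec k|$ letters $W$, such that all starting ranks are nonnegative, where $r_1=0$, $r_{i+1}=r_i+k_j$ if $\pi_i=S^{k_j}$ and $r_{i+1}=r_i-1$ if $\pi_i=W$. $\mathcal D_{\vec k}$ is the set of such paths. $\mathrm{area}(\pi)=\sum_j a_j$ where $a_j$ is the starting rank of $S^{k_j}$. Filling algorithm $\eta_*$: in a tableau of $\ell$ top-justified columns, column $i$ having $k_i+1$ cells, place $1$ at the top of column 1; for $i=2,\dots,N$, call an entry active if it is currently the bottom entry of a column $i'$ not yet containing $k_{i'}+1$ entries; if $\pi_i=W$ place $i$ immediately below the largest active entry, otherwise place $i$ at the top of the first empty column. Ranking algorithm $\gamma_*$: column 1 gets ranks $0,\dots,k_1$ top to bottom; for $i\ge2$, if the top entry of column $i$ of $\eta_*(\pi)$ is $A+1$ and $A$ has rank $\alpha$, column $i$ gets ranks $\alpha,\dots,\alpha+k_i$ top to bottom. $\mathrm{depth}(\pi)$ is the sum of the first-row ranks. *)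

theory Defs
  imports Main
begin

text \<open>Letters of a k-Dyck path: S j stands for the letter S^{k_j} (0-based index j),
  W is the letter W.\<close>
datatype letter = S nat | W

fun is_S :: "letter \<Rightarrow> bool" where
  "is_S (S j) = True" | "is_S W = False"

fun step :: "nat list \<Rightarrow> letter \<Rightarrow> int" where
  "step k (S j) = int (k ! j)" | "step k W = -1"

text \<open>Starting rank of the letter at (0-based) position i: r_{i+1} in the paper.\<close>
definition srank :: "nat list \<Rightarrow> letter list \<Rightarrow> nat \<Rightarrow> int" where
  "srank k p i = sum_list (map (step k) (take i p))"

definition dyck :: "nat list \<Rightarrow> letter list set" where
  "dyck k = {p. filter is_S p = map S [0..<length k]
              \<and> length (filter (\<lambda>x. x = W) p) = sum_list k
              \<and> (\<forall>i < length p. srank k p i \<ge> 0)}"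

definition area :: "nat list \<Rightarrow> letter list \<Rightarrow> int" where
  "area k p = (\<Sum>i\<leftarrow>filter (\<lambda>i. is_S (p ! i)) [0..<length p]. srank k p i)"

text \<open>Filling algorithm eta_*: a tableau is a list of columns, each column the list of its
  entries from top to bottom.\<close>
definition active_cols :: "nat list \<Rightarrow> nat list list \<Rightarrow> nat set" where
  "active_cols k T = {c. c < length T \<and> T ! c \<noteq> [] \<and> length (T ! c) < k ! c + 1}"

definition fill_step :: "nat list \<Rightarrow> nat list list \<Rightarrow> nat \<Rightarrow> letter \<Rightarrow> nat list list" where
  "fill_step k T i x =
     (if x = W then
        (let m = Max ((\<lambda>c. last (T ! c)) ` active_cols k T);
             c = (LEAST c. c \<in> active_cols k T \<and> last (T ! c) = m)
         in T[c := T ! c @ [i]])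
      else
        (let c = (LEAST c. c < length T \<and> T ! c = []) in T[c := [i]]))"

definition eta :: "nat list \<Rightarrow> letter list \<Rightarrow> nat list list" where
  "eta k p = fold (\<lambda>(i, x) T. fill_step k T i x)
                  (zip [2..<length p + 1] (tl p))
                  ((replicate (length k) [])[0 := [1]])"

definition gamma :: "nat list \<Rightarrow> nat list list \<Rightarrow> nat \<Rightarrow> int" where
  "gamma k T = fold (\<lambda>i rk.
      let \<alpha> = (if i = 0 then 0 else rk (hd (T ! i) - 1)) in
        (\<lambda>e. case find (\<lambda>q. T ! i ! q = e) [0..<length (T ! i)] of
                Some q \<Rightarrow> \<alpha> + int q
              | None \<Rightarrow> rk e))
      [0..<length k] (\<lambda>_. 0)"

definition depth :: "nat list \<Rightarrow> letter list \<Rightarrow> int" where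
  "depth k p = (let T = eta k p in \<Sum>i<length k. gamma k T (hd (T ! i)))"

text \<open>The word S^a W^x S^b W^y S^c W^z for vector (a,b,c).\<close>
definition word3 :: "nat \<Rightarrow> nat \<Rightarrow> nat \<Rightarrow> letter list" where
  "word3 x y z = [S 0] @ replicate x W @ [S 1] @ replicate y W @ [S 2] @ replicate z W"

definition theta :: "nat \<Rightarrow> nat \<Rightarrow> nat \<Rightarrow> letter list \<Rightarrow> letter list" where
  "theta a b c p =
     (let (l1, l2) = (THE (l1, l2). l1 \<le> a \<and> l1 + l2 \<le> a + b
                         \<and> p = word3 l1 l2 (a + b + c - l1 - l2))
      in if l2 \<le> b then word3 (a - l1) (b - l2) (c + l1 + l2)
         else word3 (a + b - l1 - l2) l2 (c + l1))"

end

theory Submission imports Defs begin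

lemma nth_word3:
  assumes "i < l1 + l2 + l3 + 3"
  shows "word3 l1 l2 l3 ! i = (if i = 0 then S 0 else if i = l1+1 then S 1
           else if i = l1+l2+2 then S 2 else W)"
  using assms by (auto simp: word3_def nth_append nth_Cons')

lemma length_word3[simp]: "length (word3 l1 l2 l3) = l1 + l2 + l3 + 3"
  by (simp add: word3_def)

lemma srank_Suc: "i < length p \<Longrightarrow> srank k p (Suc i) = srank k p i + step k (p ! i)"
  by (simp add: srank_def take_Suc_conv_app_nth)

lemma srank_word3:
  assumes "i \<le> l1 + l2 + l3 + 3"
  shows "srank [a,b,c] (word3 l1 l2 l3) i =
    (if i = 0 then 0
     else if i \<le> l1+1 then int a - (int i - 1)
     else if i \<le> l1+l2+2 then int a + int b - (int i - 2)
     else int a + int b + int c - (int i - 3))"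
  using assms
proof (induction i)
  case 0
  then show ?case by (simp add: srank_def)
next
  case (Suc i)
  then have "i < length (word3 l1 l2 l3)" by simp
  then show ?case using Suc by (simp add: srank_Suc nth_word3)
qed

lemma area_word3:
  "area [a,b,c] (word3 l1 l2 l3) = 2 * int a + int b - 2 * int l1 - int l2"
proof -
  let ?p = "word3 l1 l2 l3"
  have d: "distinct (filter (\<lambda>i. is_S (?p ! i)) [0..<length ?p])" by simp
  have s: "set (filter (\<lambda>i. is_S (?p ! i)) [0..<length ?p]) = {0, l1+1, l1+l2+2}"
    by (auto simp: nth_word3 split: if_splits)
  have "area [a,b,c] ?p = (\<Sum>i\<in>{0, l1+1, l1+l2+2}. srank [a,b,c] ?p i)"
    unfolding area_def using sum_list_distinct_conv_sum_set[OF d] s by simp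
  also have "\<dots> = 2 * int a + int b - 2 * int l1 - int l2"
    by (simp add: srank_word3)
  finally show ?thesis .
qed

lemma word3_in_dyck:
  assumes "l1 \<le> a" "l1 + l2 \<le> a + b"
  shows "word3 l1 l2 (a + b + c - l1 - l2) \<in> dyck [a,b,c]"
proof -
  have f: "filter is_S (word3 l1 l2 l3) = [S 0, S 1, S 2]" for l3
    by (simp add: word3_def)
  have w: "length (filter (\<lambda>x. x = W) (word3 l1 l2 l3)) = l1 + l2 + l3" for l3
    by (simp add: word3_def)
  show ?thesis unfolding dyck_def using assms
    by (auto simp: f w srank_word3 upt_rec)
qed

lemma split_S:
  "filter is_S p = S j # rest \<Longrightarrow> \<exists>n q. p = replicate n W @ S j # q \<and> filter is_S q = rest"
proof (induction p)
  case Nil then show ?case by simp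
next
  case (Cons x p)
  show ?case
  proof (cases x)
    case (S i)
    then show ?thesis using Cons.prems by (intro exI[of _ 0]) auto
  next
    case W
    then obtain n q where "p = replicate n W @ S j # q \<and> filter is_S q = rest"
      using Cons by auto
    then show ?thesis using W by (intro exI[of _ "Suc n"]) auto
  qed
qed

lemma nil_S: "filter is_S p = [] \<Longrightarrow> p = replicate (length p) W"
proof (induction p)
  case Nil then show ?case by simp
next
  case (Cons x p) then show ?case by (cases x) auto
qed

lemma rep_S_inj:
  "replicate n W @ S j # xs = replicate m W @ S j' # ys \<Longrightarrow> n = m \<and> xs = ys"
proof (induction n arbitrary: m)
  case 0 then show ?case by (cases m) auto
next
  case (Suc n) then show ?case by (cases m) auto
qed

lemma word3_inj:
  "word3 l1 l2 l3 = word3 m1 m2 m3 \<Longrightarrow> l1 = m1 \<and> l2 = m2"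
  unfolding word3_def using rep_S_inj[of l1 "Suc 0"] rep_S_inj[of l2 2]
  by (metis append.simps append_Cons rep_S_inj)

lemma dyck_word3:
  assumes "p \<in> dyck [a,b,c]"
  shows "\<exists>l1 l2. l1 \<le> a \<and> l1 + l2 \<le> a + b \<and> p = word3 l1 l2 (a + b + c - l1 - l2)"
proof -
  have f: "filter is_S p = [S 0, S 1, S 2]" using assms by (simp add: dyck_def upt_rec)
  obtain x0 q0 where q0: "p = replicate x0 W @ S 0 # q0" "filter is_S q0 = [S 1, S 2]"
    using split_S[OF f] by blast
  obtain x1 q1 where q1: "q0 = replicate x1 W @ S 1 # q1" "filter is_S q1 = [S 2]"
    using split_S[OF q0(2)] by blast
  obtain x2 q2 where q2: "q1 = replicate x2 W @ S 2 # q2" "filter is_S q2 = []"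
    using split_S[OF q1(2)] by blast
  have q3: "q2 = replicate (length q2) W" using nil_S[OF q2(2)] .
  have x0: "x0 = 0"
  proof (rule ccontr)
    assume "x0 \<noteq> 0"
    then have "p ! 0 = W" "1 < length p" using q0 by (auto simp: nth_append)
    then have "srank [a,b,c] p 1 = -1"
      by (cases p) (simp_all add: srank_def)
    then show False using assms \<open>1 < length p\<close> unfolding dyck_def by force
  qed
  have pw: "p = word3 x1 x2 (length q2)"
    using q0 q1 q2 q3 x0 by (simp add: word3_def)
  have cnt: "x1 + x2 + length q2 = a + b + c"
    using assms pw unfolding dyck_def by (simp add: word3_def)
  have r: "\<forall>i < length p. srank [a,b,c] p i \<ge> 0" using assms by (simp add: dyck_def)
  have "srank [a,b,c] p (x1+1) \<ge> 0" using r pw by simp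
  then have "x1 \<le> a" using pw by (simp add: srank_word3)
  have "srank [a,b,c] p (x1+x2+2) \<ge> 0" using r pw by simp
  then have "x1 + x2 \<le> a + b" using pw by (simp add: srank_word3)
  have "length q2 = a + b + c - x1 - x2" using cnt by simp
  then have "x1 \<le> a \<and> x1 + x2 \<le> a + b \<and> p = word3 x1 x2 (a + b + c - x1 - x2)"
    using \<open>x1 \<le> a\<close> \<open>x1 + x2 \<le> a + b\<close> pw by simp
  then show ?thesis by blast
qed

lemma upt_snoc: "[m..<m+n] @ [m+n] = [m..<m + Suc n]" by simp

lemma upt_snoc2: "m \<le> k \<Longrightarrow> k' = Suc k \<Longrightarrow> [m..<k] @ [k] = [m..<k']" by simp

lemma fold_W_snoc:
  "fold f (zip [m..<m + Suc n] (replicate (Suc n) W)) T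
     = f (m+n, W) (fold f (zip [m..<m+n] (replicate n W)) T)"
proof -
  have "replicate (Suc n) W = replicate n W @ [W]" by (simp add: replicate_append_same)
  moreover have "[m..<m + Suc n] = [m..<m+n] @ [m+n]" by simp
  ultimately show ?thesis by simp
qed

lemma fill_W:
  assumes "x \<in> active_cols k T"
    "\<forall>c\<in>active_cols k T. c \<noteq> x \<longrightarrow> last (T!c) < last (T!x)"
  shows "fill_step k T i W = T[x := T!x @ [i]]"
proof -
  let ?A = "active_cols k T"
  have fin: "finite ?A" by (rule finite_subset[of _ "{..<length T}"]) (auto simp: active_cols_def)
  have M: "Max ((\<lambda>c. last (T ! c)) ` ?A) = last (T!x)"
    using assms fin by (intro Max_eqI) force+
  have L: "(LEAST c. c \<in> ?A \<and> last (T ! c) = last (T!x)) = x"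
    using assms by (intro Least_equality) force+
  show ?thesis unfolding fill_step_def using M L by (simp add: Let_def)
qed

lemma fill_S:
  assumes "c < length T" "T!c = []" "\<forall>c'<c. T!c' \<noteq> []"
  shows "fill_step k T i (S j) = T[c := [i]]"
proof -
  have "(LEAST c. c < length T \<and> T ! c = []) = c"
    using assms by (intro Least_equality) (auto simp: not_less[symmetric])
  then show ?thesis by (simp add: fill_step_def)
qed

abbreviation FF :: "nat list \<Rightarrow> nat \<times> letter \<Rightarrow> nat list list \<Rightarrow> nat list list" where
  "FF k \<equiv> (\<lambda>(i, x) T. fill_step k T i x)"

lemma phaseA:
  "n \<le> a \<Longrightarrow> fold (FF [a,b,c]) (zip [2..<2+n] (replicate n W)) [[1],[],[]] = [[1..<n+2],[],[]]"
proof (induction n)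
  case 0 then show ?case by simp
next
  case (Suc n)
  let ?T = "[[1..<n+2],[],[]] :: nat list list"
  have "0 \<in> active_cols [a,b,c] ?T" using Suc.prems by (simp add: active_cols_def)
  moreover have "\<forall>c'\<in>active_cols [a,b,c] ?T. c' \<noteq> 0 \<longrightarrow> last (?T!c') < last (?T!0)"
    by (auto simp: active_cols_def less_Suc_eq numeral_3_eq_3)
  ultimately have "fill_step [a,b,c] ?T (2+n) W = ?T[0 := ?T!0 @ [2+n]]" by (rule fill_W)
  then show ?case using Suc by (simp only: fold_W_snoc) simp
qed

lemma phaseB:
  "n \<le> b \<Longrightarrow> fold (FF [a,b,c]) (zip [l1+3..<l1+3+n] (replicate n W)) [[1..<l1+2],[l1+2],[]]
     = [[1..<l1+2],[l1+2..<l1+3+n],[]]"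
proof (induction n)
  case 0 then show ?case by (simp add: numeral_eq_Suc)
next
  case (Suc n)
  let ?T = "[[1..<l1+2],[l1+2..<l1+3+n],[]] :: nat list list"
  have "1 \<in> active_cols [a,b,c] ?T" using Suc.prems by (simp add: active_cols_def)
  moreover have "\<forall>c'\<in>active_cols [a,b,c] ?T. c' \<noteq> 1 \<longrightarrow> last (?T!c') < last (?T!1)"
    by (auto simp: active_cols_def less_Suc_eq numeral_3_eq_3)
  ultimately have "fill_step [a,b,c] ?T (l1+3+n) W = ?T[1 := ?T!1 @ [l1+3+n]]" by (rule fill_W)
  moreover note upt_snoc2[of "l1+2" "l1+3+n" "4+(l1+n)"]
  ultimately show ?case using Suc by (simp only: fold_W_snoc) simp
qed

lemma phaseC:
  "l1 + n \<le> a \<Longrightarrow> fold (FF [a,b,c]) (zip [l1+b+3..<l1+b+3+n] (replicate n W))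
       [[1..<l1+2],[l1+2..<l1+b+3],[]]
     = [[1..<l1+2] @ [l1+b+3..<l1+b+3+n],[l1+2..<l1+b+3],[]]"
proof (induction n)
  case 0 then show ?case by simp
next
  case (Suc n)
  let ?T = "[[1..<l1+2] @ [l1+b+3..<l1+b+3+n],[l1+2..<l1+b+3],[]] :: nat list list"
  have "0 \<in> active_cols [a,b,c] ?T" using Suc.prems by (simp add: active_cols_def)
  moreover have "\<forall>c'\<in>active_cols [a,b,c] ?T. c' \<noteq> 0 \<longrightarrow> last (?T!c') < last (?T!0)"
    by (auto simp: active_cols_def less_Suc_eq numeral_3_eq_3)
  ultimately have "fill_step [a,b,c] ?T (l1+b+3+n) W = ?T[0 := ?T!0 @ [l1+b+3+n]]" by (rule fill_W)
  moreover note upt_snoc2[of "l1+b+3" "l1+b+3+n" "4+(l1+(b+n))"]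
  ultimately show ?case using Suc by (simp only: fold_W_snoc) simp
qed

lemma fill_W_ext:
  "length (fill_step k T i W) = length T \<and>
   (\<forall>c<length T. \<exists>ys. fill_step k T i W ! c = T!c @ ys \<and> (\<forall>y\<in>set ys. y = i))"
proof -
  obtain c0 where "fill_step k T i W = T[c0 := T!c0 @ [i]]"
    by (simp add: fill_step_def Let_def)
  then show ?thesis
  proof (intro conjI allI impI)
    fix c assume eq: "fill_step k T i W = T[c0 := T!c0 @ [i]]" and c: "c < length T"
    show "\<exists>ys. fill_step k T i W ! c = T!c @ ys \<and> (\<forall>y\<in>set ys. y = i)"
    proof (cases "c = c0")
      case True then show ?thesis using eq c by (intro exI[of _ "[i]"]) simp
    next
      case False then show ?thesis using eq c by (intro exI[of _ "[]"]) simp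
    qed
  qed simp
qed

lemma phaseD:
  "length (fold (FF k) (zip [m..<m+n] (replicate n W)) T) = length T \<and>
   (\<forall>c<length T. \<exists>ys. fold (FF k) (zip [m..<m+n] (replicate n W)) T ! c = T!c @ ys
       \<and> (\<forall>y\<in>set ys. m \<le> y))"
proof (induction n)
  case 0 then show ?case by (auto intro: exI[of _ "[]"])
next
  case (Suc n)
  let ?T = "fold (FF k) (zip [m..<m+n] (replicate n W)) T"
  have e: "fold (FF k) (zip [m..<m+Suc n] (replicate (Suc n) W)) T = fill_step k ?T (m+n) W"
    by (simp only: fold_W_snoc) simp
  show ?case unfolding e
  proof (intro conjI allI impI)
    show "length (fill_step k ?T (m+n) W) = length T" using fill_W_ext Suc.IH by metis
    fix c assume "c < length T"
    then obtain ys where ys: "?T ! c = T!c @ ys" "\<forall>y\<in>set ys. m \<le> y" using Suc.IH by blast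
    obtain zs where zs: "fill_step k ?T (m+n) W ! c = ?T!c @ zs" "\<forall>y\<in>set zs. y = m+n"
      using fill_W_ext[of k ?T "m+n"] \<open>c < length T\<close> Suc.IH by metis
    show "\<exists>ys. fill_step k ?T (m+n) W ! c = T!c @ ys \<and> (\<forall>y\<in>set ys. m \<le> y)"
      using ys zs by (intro exI[of _ "ys @ zs"]) auto
  qed
qed

definition GG :: "nat list list \<Rightarrow> nat \<Rightarrow> (nat \<Rightarrow> int) \<Rightarrow> nat \<Rightarrow> int" where
  "GG T i rk = (let \<alpha> = (if i = 0 then 0 else rk (hd (T ! i) - 1)) in
        (\<lambda>e. case find (\<lambda>q. T ! i ! q = e) [0..<length (T ! i)] of
                Some q \<Rightarrow> \<alpha> + int q
              | None \<Rightarrow> rk e))"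

lemma gamma3: "gamma [a,b,c] T = GG T 2 (GG T 1 (GG T 0 (\<lambda>_. 0)))"
proof -
  have "[0..<length [a,b,c]] = [0,1,2]" by (simp add: upt_rec)
  moreover have "gamma [a,b,c] T = fold (GG T) [0..<length [a,b,c]] (\<lambda>_. 0)"
    unfolding gamma_def GG_def[abs_def] by (rule refl)
  ultimately show ?thesis by (simp only: fold_Cons fold_Nil comp_apply id_apply)
qed

lemma GG_Some: "find (\<lambda>q. T ! i ! q = e) [0..<length (T ! i)] = Some q \<Longrightarrow>
   GG T i rk e = (if i = 0 then 0 else rk (hd (T ! i) - 1)) + int q"
  by (simp add: GG_def)

lemma GG_None: "find (\<lambda>q. T ! i ! q = e) [0..<length (T ! i)] = None \<Longrightarrow>
   GG T i rk e = rk e"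
  by (simp add: GG_def)

lemma find_Some':
  assumes "X = xs @ ys" "distinct xs" "q < length xs" "xs ! q = e"
  shows "find (\<lambda>j. X ! j = e) [0..<length X] = Some q"
proof -
  have "\<forall>j<q. X ! j \<noteq> e"
  proof (intro allI impI)
    fix j assume "j < q"
    then have "X ! j = xs ! j" "X ! q = xs ! q" using assms by (auto simp: nth_append)
    then show "X ! j \<noteq> e" using assms \<open>j < q\<close> nth_eq_iff_index_eq[of xs j q] by auto
  qed
  then show ?thesis unfolding find_Some_iff using assms
    by (intro exI[of _ q]) (auto simp: nth_append)
qed

lemma find_None': "e \<notin> set X \<Longrightarrow> find (\<lambda>j. X ! j = e) [0..<length X] = None"
  unfolding find_None_iff by (auto simp: in_set_conv_nth)

lemma depth_cols:
  assumes "eta [a,b,c] p = [X,Y,Z]" "hd X = 1" "hd Y = y" "hd Z = z"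
   "find (\<lambda>q. X!q = 1) [0..<length X] = Some 0"
   "find (\<lambda>q. Y!q = 1) [0..<length Y] = None"
   "find (\<lambda>q. Z!q = 1) [0..<length Z] = None"
   "find (\<lambda>q. X!q = y - 1) [0..<length X] = Some q1"
   "find (\<lambda>q. Y!q = y) [0..<length Y] = Some 0"
   "find (\<lambda>q. Z!q = y) [0..<length Z] = None"
   "find (\<lambda>q. Z!q = z) [0..<length Z] = Some 0"
  shows "depth [a,b,c] p = int q1 + GG [X,Y,Z] 1 (GG [X,Y,Z] 0 (\<lambda>_. 0)) (z - 1)"
proof -
  let ?T = "[X,Y,Z]"
  let ?R1 = "GG ?T 0 (\<lambda>_. 0)"
  let ?R2 = "GG ?T 1 ?R1"
  let ?R3 = "GG ?T 2 ?R2"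
  have s: "{..<length [a,b,c]} = {0,1,2}" by auto
  have d: "depth [a,b,c] p = ?R3 1 + ?R3 y + ?R3 z"
    unfolding depth_def Let_def assms(1) gamma3 s using assms(2-4) by simp
  have r11: "?R1 1 = 0" by (rule trans[OF GG_Some]) (use assms in simp_all)
  have r1y: "?R1 (y - 1) = int q1" by (rule trans[OF GG_Some]) (use assms in simp_all)
  have r21: "?R2 1 = 0" by (rule trans[OF GG_None]) (use assms r11 in simp_all)
  have r2y: "?R2 y = int q1" by (rule trans[OF GG_Some]) (use assms r1y in simp_all)
  have r31: "?R3 1 = 0" by (rule trans[OF GG_None]) (use assms r21 in simp_all)
  have r3y: "?R3 y = int q1" by (rule trans[OF GG_None]) (use assms r2y in simp_all)
  have r3z: "?R3 z = ?R2 (z - 1)" by (rule trans[OF GG_Some]) (use assms in simp_all)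
  show ?thesis using d r31 r3y r3z by simp
qed

lemma upt_split3: "[m..<m+x+Suc y] = [m..<m+x] @ (m+x) # [Suc (m+x)..<Suc (m+x)+y]"
proof -
  have "[m..<m+x+Suc y] = [m..<m+x] @ [m+x..<m+x+Suc y]" by (rule upt_add_eq_append) simp
  also have "[m+x..<m+x+Suc y] = (m+x) # [Suc (m+x)..<Suc (m+x)+y]" by (simp add: upt_conv_Cons)
  finally show ?thesis .
qed

lemma eta_word3:
  "eta [a,b,c] (word3 l1 l2 l3) =
    fold (FF [a,b,c]) (zip [l1+l2+4..<l1+l2+4+l3] (replicate l3 W))
     (fill_step [a,b,c]
       (fold (FF [a,b,c]) (zip [l1+3..<l1+3+l2] (replicate l2 W))
          (fill_step [a,b,c] (fold (FF [a,b,c]) (zip [2..<2+l1] (replicate l1 W)) [[1],[],[]])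
             (l1+2) (S 1)))
       (l1+l2+3) (S 2))"
proof -
  have t: "tl (word3 l1 l2 l3) = replicate l1 W @ S 1 # replicate l2 W @ S 2 # replicate l3 W"
    by (simp add: word3_def)
  have L: "length (word3 l1 l2 l3) + 1 = 2+l1+Suc (l2+Suc l3)" by simp
  have u1: "[2..<length (word3 l1 l2 l3) + 1] = [2..<2+l1] @ (2+l1) # [Suc (2+l1)..<Suc (2+l1)+(l2+Suc l3)]"
    unfolding L by (rule upt_split3)
  have e0: "Suc (2+l1) = l1+3" by simp
  have e1: "l1+3+(l2+Suc l3) = l1+3+l2+Suc l3" by simp
  have u2: "[Suc (2+l1)..<Suc (2+l1)+(l2+Suc l3)] = [l1+3..<l1+3+l2] @ (l1+3+l2) # [Suc (l1+3+l2)..<Suc (l1+3+l2)+l3]"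
    unfolding e0 e1 by (rule upt_split3)
  have i0: "(replicate (length [a,b,c]) [] :: nat list list)[0 := [1]] = [[1],[],[]]" by simp
  have len1: "length [2..<2+l1] = length (replicate l1 W)"
    by (simp only: length_upt length_replicate diff_add_inverse)
  have len2: "length [l1+3..<l1+3+l2] = length (replicate l2 W)"
    by (simp only: length_upt length_replicate diff_add_inverse)
  have f1: "2+l1 = l1+2" by simp
  have f2: "l1+3+l2 = l1+l2+3" by simp
  have f3: "Suc (l1+l2+3) = l1+l2+4" by simp
  show ?thesis unfolding eta_def t u1 u2 i0
    by (simp only: zip_append[OF len1] zip_append[OF len2] zip_Cons_Cons fold_append fold_Cons
        comp_apply prod.case) (simp only: f1 f2 f3)
qed

lemma phaseAB:
  assumes "l1 \<le> a" "l1 + l2 \<le> a + b"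
  shows "fold (FF [a,b,c]) (zip [l1+3..<l1+3+l2] (replicate l2 W))
          (fill_step [a,b,c] (fold (FF [a,b,c]) (zip [2..<2+l1] (replicate l1 W)) [[1],[],[]])
             (l1+2) (S 1))
    = (if l2 \<le> b then [[1..<l1+2],[l1+2..<l1+3+l2],[]]
       else [[1..<l1+2] @ [l1+b+3..<l1+l2+3], [l1+2..<l1+b+3], []])"
proof -
  have A: "fold (FF [a,b,c]) (zip [2..<2+l1] (replicate l1 W)) [[1],[],[]] = [[1..<l1+2],[],[]]"
    using phaseA assms by simp
  have S1: "fill_step [a,b,c] [[1..<l1+2],[],[]] (l1+2) (S 1) = [[1..<l1+2],[l1+2],[]]"
    by (subst fill_S[of 1]) (auto simp: less_Suc_eq)
  show ?thesis
  proof (cases "l2 \<le> b")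
    case True
    then show ?thesis unfolding A S1 using phaseB[of l2 b a c l1] by simp
  next
    case False
    have sp: "zip [l1+3..<l1+3+l2] (replicate l2 W) =
       zip [l1+3..<l1+3+b] (replicate b W) @ zip [l1+b+3..<l1+b+3+(l2-b)] (replicate (l2-b) W)"
    proof -
      have "[l1+3..<l1+3+l2] = [l1+3..<l1+3+b] @ [l1+3+b..<l1+3+b+(l2-b)]"
        using False upt_add_eq_append[of "l1+3" "l1+3+b" "l2-b"] by (simp add: algebra_simps)
      moreover have "replicate l2 W = replicate b W @ replicate (l2-b) W"
        using False by (simp add: replicate_add[symmetric])
      ultimately show ?thesis by (simp add: algebra_simps)
    qed
    have B: "fold (FF [a,b,c]) (zip [l1+3..<l1+3+b] (replicate b W)) [[1..<l1+2],[l1+2],[]]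
       = [[1..<l1+2],[l1+2..<l1+b+3],[]]" using phaseB[of b b a c l1] by (simp add: algebra_simps)
    have C: "fold (FF [a,b,c]) (zip [l1+b+3..<l1+b+3+(l2-b)] (replicate (l2-b) W))
       [[1..<l1+2],[l1+2..<l1+b+3],[]] = [[1..<l1+2] @ [l1+b+3..<l1+b+3+(l2-b)],[l1+2..<l1+b+3],[]]"
      by (rule phaseC) (use assms False in simp)
    have e: "l1+b+3+(l2-b) = l1+l2+3" using False by simp
    have "fold (FF [a,b,c]) (zip [l1+3..<l1+3+l2] (replicate l2 W)) [[1..<l1+2],[l1+2],[]]
      = [[1..<l1+2] @ [l1+b+3..<l1+b+3+(l2-b)],[l1+2..<l1+b+3],[]]"
      unfolding sp fold_append comp_apply B C ..
    then show ?thesis unfolding A S1 e using False by simp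
  qed
qed

lemma len3: "length xs = 3 \<Longrightarrow> xs = [xs!0, xs!1, xs!2]"
  by (auto simp: numeral_eq_Suc length_Suc_conv)

lemma depth_mid:
  assumes AB: "fold (FF [a,b,c]) (zip [l1+3..<l1+3+l2] (replicate l2 W))
          (fill_step [a,b,c] (fold (FF [a,b,c]) (zip [2..<2+l1] (replicate l1 W)) [[1],[],[]])
             (l1+2) (S 1)) = [C0, C1, []]"
   and h0: "C0 ! 0 = 1" "l1 < length C0" "C0 ! l1 = l1+1" "distinct C0" "set C0 \<subseteq> {1..<l1+l2+3}"
   and h1: "C1 ! 0 = l1+2" "C1 \<noteq> []" "set C1 \<subseteq> {l1+2..<l1+l2+3}"
  shows "\<exists>ys0 ys1 ys2. (\<forall>y\<in>set ys0 \<union> set ys1. l1+l2+4 \<le> y) \<and>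
     depth [a,b,c] (word3 l1 l2 l3) = int l1 +
        GG [C0@ys0, C1@ys1, (l1+l2+3)#ys2] 1 (GG [C0@ys0, C1@ys1, (l1+l2+3)#ys2] 0 (\<lambda>_. 0)) (l1+l2+2)"
proof -
  have C0ne: "C0 \<noteq> []" using h0 by auto
  have S2: "fill_step [a,b,c] [C0,C1,[]] (l1+l2+3) (S 2) = [C0,C1,[l1+l2+3]]"
    using C0ne h1 by (subst fill_S[of 2]) (auto simp: less_Suc_eq numeral_eq_Suc)
  let ?E = "eta [a,b,c] (word3 l1 l2 l3)"
  have E: "?E = fold (FF [a,b,c]) (zip [l1+l2+4..<l1+l2+4+l3] (replicate l3 W)) [C0,C1,[l1+l2+3]]"
    unfolding eta_word3 AB S2 ..
  note D = phaseD[of "[a,b,c]" "l1+l2+4" l3 "[C0,C1,[l1+l2+3]]", folded E]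
  have len: "length ?E = 3" using D[THEN conjunct1] by simp
  have D2: "\<And>c. c < 3 \<Longrightarrow> \<exists>ys. ?E!c = [C0,C1,[l1+l2+3]]!c @ ys \<and> (\<forall>y\<in>set ys. l1+l2+4 \<le> y)"
    using D[THEN conjunct2] by simp
  obtain ys0 where y0: "?E ! 0 = C0 @ ys0" "\<forall>y\<in>set ys0. l1+l2+4 \<le> y" using D2[of 0] by auto
  obtain ys1 where y1: "?E ! 1 = C1 @ ys1" "\<forall>y\<in>set ys1. l1+l2+4 \<le> y" using D2[of 1] by auto
  obtain ys2 where y2: "?E ! 2 = [l1+l2+3] @ ys2" "\<forall>y\<in>set ys2. l1+l2+4 \<le> y" using D2[of 2] by auto
  have Eq: "?E = [C0@ys0, C1@ys1, (l1+l2+3)#ys2]"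
  proof -
    have "?E = [?E!0, ?E!1, ?E!2]" by (rule len3[OF len])
    also have "\<dots> = [C0@ys0, C1@ys1, (l1+l2+3)#ys2]" by (simp only: y0(1) y1(1) y2(1)) simp
    finally show ?thesis .
  qed
  let ?X = "C0@ys0" and ?Y = "C1@ys1" and ?Z = "(l1+l2+3)#ys2"
  have dc: "depth [a,b,c] (word3 l1 l2 l3) = int l1 + GG [?X,?Y,?Z] 1 (GG [?X,?Y,?Z] 0 (\<lambda>_. 0)) (l1+l2+3 - 1)"
  proof (rule depth_cols[OF Eq])
    show "hd ?X = 1" using C0ne h0 by (simp add: hd_conv_nth nth_append)
    show "hd ?Y = l1+2" using h1 by (simp add: hd_conv_nth nth_append)
    show "hd ?Z = l1+l2+3" by simp
    show "find (\<lambda>q. ?X!q = 1) [0..<length ?X] = Some 0"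
      using h0 C0ne by (intro find_Some'[of _ C0 ys0]) (auto simp: nth_append)
    show "find (\<lambda>q. ?Y!q = 1) [0..<length ?Y] = None"
      using h1 y1 by (intro find_None') auto
    show "find (\<lambda>q. ?Z!q = 1) [0..<length ?Z] = None"
      using y2 by (intro find_None') auto
    show "find (\<lambda>q. ?X!q = l1+2-1) [0..<length ?X] = Some l1"
      using h0 by (intro find_Some'[of _ C0 ys0]) auto
    show "find (\<lambda>q. ?Y!q = l1+2) [0..<length ?Y] = Some 0"
    proof (rule find_Some'[of _ "[l1+2]" "tl C1 @ ys1"])
      have "C1 = (l1+2) # tl C1" using h1 by (metis hd_Cons_tl hd_conv_nth)
      then show "C1 @ ys1 = [l1+2] @ (tl C1 @ ys1)" by (metis append_Cons append_Nil)
    qed auto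
    show "find (\<lambda>q. ?Z!q = l1+2) [0..<length ?Z] = None"
      using y2 by (intro find_None') auto
    show "find (\<lambda>q. ?Z!q = l1+l2+3) [0..<length ?Z] = Some 0"
      by (intro find_Some'[of _ "[l1+l2+3]" ys2]) auto
  qed
  have F: "(\<forall>y\<in>set ys0 \<union> set ys1. l1+l2+4 \<le> y) \<and>
     depth [a,b,c] (word3 l1 l2 l3) = int l1 + GG [?X,?Y,?Z] 1 (GG [?X,?Y,?Z] 0 (\<lambda>_. 0)) (l1+l2+2)"
    using dc y0(2) y1(2) by auto
  show ?thesis by (rule exI[of _ ys0], rule exI[of _ ys1], rule exI[of _ ys2], rule F)
qed

declare upt_Suc[simp del]

lemma depth_word3:
  assumes "l1 \<le> a" "l1 + l2 \<le> a + b"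
  shows "depth [a,b,c] (word3 l1 l2 l3) =
     (if l2 \<le> b then 2 * int l1 + int l2 else 2 * int l1 + int l2 - int b)"
proof (cases "l2 \<le> b")
  case True
  let ?C0 = "[1..<l1+2]" and ?C1 = "[l1+2..<l1+3+l2]"
  have AB: "fold (FF [a,b,c]) (zip [l1+3..<l1+3+l2] (replicate l2 W))
          (fill_step [a,b,c] (fold (FF [a,b,c]) (zip [2..<2+l1] (replicate l1 W)) [[1],[],[]])
             (l1+2) (S 1)) = [?C0, ?C1, []]" using phaseAB[OF assms] True by simp
  obtain ys0 ys1 ys2 where Y: "\<forall>y\<in>set ys0 \<union> set ys1. l1+l2+4 \<le> y" and
    D: "depth [a,b,c] (word3 l1 l2 l3) = int l1 +
        GG [?C0@ys0, ?C1@ys1, (l1+l2+3)#ys2] 1 (GG [?C0@ys0, ?C1@ys1, (l1+l2+3)#ys2] 0 (\<lambda>_. 0)) (l1+l2+2)"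
  proof -
    have "\<exists>ys0 ys1 ys2. (\<forall>y\<in>set ys0 \<union> set ys1. l1+l2+4 \<le> y) \<and> depth [a,b,c] (word3 l1 l2 l3) = int l1 +
        GG [?C0@ys0, ?C1@ys1, (l1+l2+3)#ys2] 1 (GG [?C0@ys0, ?C1@ys1, (l1+l2+3)#ys2] 0 (\<lambda>_. 0)) (l1+l2+2)"
      by (rule depth_mid[OF AB]) (use True in \<open>auto simp: nth_append\<close>)
    then show ?thesis using that by blast
  qed
  let ?T = "[?C0@ys0, ?C1@ys1, (l1+l2+3)#ys2]"
  have r1: "GG ?T 0 (\<lambda>_. 0) (l1+1) = int l1"
  proof (rule trans[OF GG_Some[of _ _ _ l1]])
    show "find (\<lambda>q. ?T ! 0 ! q = l1+1) [0..<length (?T ! 0)] = Some l1"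
      unfolding nth_Cons_0 by (rule find_Some'[of _ ?C0 ys0]) simp_all
  qed simp
  have r2: "GG ?T 1 (GG ?T 0 (\<lambda>_. 0)) (l1+l2+2) = GG ?T 0 (\<lambda>_. 0) (l1+1) + int l2"
  proof (rule trans[OF GG_Some[of _ _ _ l2]])
    show "find (\<lambda>q. ?T ! 1 ! q = l1+l2+2) [0..<length (?T ! 1)] = Some l2"
      unfolding One_nat_def nth_Cons_Suc nth_Cons_0 by (rule find_Some'[of _ ?C1 ys1]) simp_all
  qed simp
  show ?thesis using D r1 r2 True by simp
next
  case False
  let ?C0 = "[1..<l1+2] @ [l1+b+3..<l1+l2+3]" and ?C1 = "[l1+2..<l1+b+3]"
  have AB: "fold (FF [a,b,c]) (zip [l1+3..<l1+3+l2] (replicate l2 W))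
          (fill_step [a,b,c] (fold (FF [a,b,c]) (zip [2..<2+l1] (replicate l1 W)) [[1],[],[]])
             (l1+2) (S 1)) = [?C0, ?C1, []]" using phaseAB[OF assms] False by simp
  obtain ys0 ys1 ys2 where Y: "\<forall>y\<in>set ys0 \<union> set ys1. l1+l2+4 \<le> y" and
    D: "depth [a,b,c] (word3 l1 l2 l3) = int l1 +
        GG [?C0@ys0, ?C1@ys1, (l1+l2+3)#ys2] 1 (GG [?C0@ys0, ?C1@ys1, (l1+l2+3)#ys2] 0 (\<lambda>_. 0)) (l1+l2+2)"
  proof -
    have "\<exists>ys0 ys1 ys2. (\<forall>y\<in>set ys0 \<union> set ys1. l1+l2+4 \<le> y) \<and> depth [a,b,c] (word3 l1 l2 l3) = int l1 +
        GG [?C0@ys0, ?C1@ys1, (l1+l2+3)#ys2] 1 (GG [?C0@ys0, ?C1@ys1, (l1+l2+3)#ys2] 0 (\<lambda>_. 0)) (l1+l2+2)"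
      by (rule depth_mid[OF AB]) (use False in \<open>auto simp: nth_append\<close>)
    then show ?thesis using that by blast
  qed
  let ?T = "[?C0@ys0, ?C1@ys1, (l1+l2+3)#ys2]"
  have r2: "GG ?T 1 (GG ?T 0 (\<lambda>_. 0)) (l1+l2+2) = GG ?T 0 (\<lambda>_. 0) (l1+l2+2)"
  proof (rule GG_None)
    show "find (\<lambda>q. ?T ! 1 ! q = l1+l2+2) [0..<length (?T ! 1)] = None"
      unfolding One_nat_def nth_Cons_Suc nth_Cons_0 proof (rule find_None')
      have "\<forall>y\<in>set ys1. l1+l2+4 \<le> y" using Y by blast
      then have "l1+l2+2 \<notin> set ys1" by force
      then show "l1+l2+2 \<notin> set ([l1+2..<l1+b+3] @ ys1)" using False by simp
    qed
  qed
  have r1: "GG ?T 0 (\<lambda>_. 0) (l1+l2+2) = int (l1+l2-b)"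
  proof (rule trans[OF GG_Some[of _ _ _ "l1+l2-b"]])
    show "find (\<lambda>q. ?T ! 0 ! q = l1+l2+2) [0..<length (?T ! 0)] = Some (l1+l2-b)"
      unfolding nth_Cons_0
    proof (rule find_Some'[of _ ?C0 ys0])
      have nlt: "\<not> l1 + l2 - b < Suc l1" using False by simp
      show "?C0 ! (l1 + l2 - b) = l1 + l2 + 2" using False nlt by (simp add: nth_append)
    qed (use False in simp_all)
  qed simp
  show ?thesis using D r1 r2 False by simp
qed

lemma theta_word3:
  assumes "l1 \<le> a" "l1 + l2 \<le> a + b"
  shows "theta a b c (word3 l1 l2 (a+b+c-l1-l2)) =
    (if l2 \<le> b then word3 (a - l1) (b - l2) (c + l1 + l2)
     else word3 (a + b - l1 - l2) l2 (c + l1))"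
proof -
  have "(THE (m1, m2). m1 \<le> a \<and> m1 + m2 \<le> a + b
          \<and> word3 l1 l2 (a+b+c-l1-l2) = word3 m1 m2 (a + b + c - m1 - m2)) = (l1, l2)"
  proof (rule the_equality)
    show "case (l1, l2) of (m1, m2) \<Rightarrow> m1 \<le> a \<and> m1 + m2 \<le> a + b
          \<and> word3 l1 l2 (a+b+c-l1-l2) = word3 m1 m2 (a + b + c - m1 - m2)" using assms by simp
  next
    fix x assume "case x of (m1, m2) \<Rightarrow> m1 \<le> a \<and> m1 + m2 \<le> a + b
          \<and> word3 l1 l2 (a+b+c-l1-l2) = word3 m1 m2 (a + b + c - m1 - m2)"
    then show "x = (l1, l2)" by (cases x) (auto dest: word3_inj)
  qed
  then show ?thesis unfolding theta_def by simp
qed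

theorem proposition5p7:
  fixes a b c :: nat
  assumes "a > 0" "b > 0" "c > 0"
  shows "(\<forall>p \<in> dyck [a, b, c]. \<exists>!(l1, l2). l1 \<le> a \<and> l1 + l2 \<le> a + b
                     \<and> p = word3 l1 l2 (a + b + c - l1 - l2))
       \<and> (\<forall>p \<in> dyck [a, b, c]. theta a b c p \<in> dyck [a, b, c]
              \<and> theta a b c (theta a b c p) = p
              \<and> area [a, b, c] p = depth [a, b, c] (theta a b c p)
              \<and> depth [a, b, c] p = area [a, b, c] (theta a b c p))"
proof (rule conjI; rule ballI)
  fix p assume pd: "p \<in> dyck [a,b,c]"
  obtain l1 l2 where lp: "l1 \<le> a \<and> l1 + l2 \<le> a + b \<and> p = word3 l1 l2 (a + b + c - l1 - l2)"
    using dyck_word3[OF pd] by iprover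
  then have l: "l1 \<le> a" "l1 + l2 \<le> a + b" and p: "p = word3 l1 l2 (a + b + c - l1 - l2)" by simp_all
  show "\<exists>!(l1, l2). l1 \<le> a \<and> l1 + l2 \<le> a + b \<and> p = word3 l1 l2 (a + b + c - l1 - l2)"
  proof (rule ex1I[of _ "(l1, l2)"])
    show "case (l1, l2) of (l1, l2) \<Rightarrow> l1 \<le> a \<and> l1 + l2 \<le> a + b \<and> p = word3 l1 l2 (a + b + c - l1 - l2)"
      using l p by simp
  next
    fix x assume "case x of (l1, l2) \<Rightarrow> l1 \<le> a \<and> l1 + l2 \<le> a + b \<and> p = word3 l1 l2 (a + b + c - l1 - l2)"
    then show "x = (l1, l2)" using p by (cases x) (auto dest: word3_inj)
  qed
next
  fix p assume pd: "p \<in> dyck [a,b,c]"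
  obtain l1 l2 where lp: "l1 \<le> a \<and> l1 + l2 \<le> a + b \<and> p = word3 l1 l2 (a + b + c - l1 - l2)"
    using dyck_word3[OF pd] by iprover
  then have l: "l1 \<le> a" "l1 + l2 \<le> a + b" and p: "p = word3 l1 l2 (a + b + c - l1 - l2)" by simp_all
  show "theta a b c p \<in> dyck [a, b, c]
              \<and> theta a b c (theta a b c p) = p
              \<and> area [a, b, c] p = depth [a, b, c] (theta a b c p)
              \<and> depth [a, b, c] p = area [a, b, c] (theta a b c p)"
  proof (cases "l2 \<le> b")
    case True
    let ?m1 = "a - l1" and ?m2 = "b - l2"
    have m: "?m1 \<le> a" "?m1 + ?m2 \<le> a + b" by simp_all
    have e: "c + l1 + l2 = a + b + c - ?m1 - ?m2" using l True by simp
    have "theta a b c p = word3 ?m1 ?m2 (c + l1 + l2)"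
      unfolding p theta_word3[OF l] using True by simp
    then have t: "theta a b c p = word3 ?m1 ?m2 (a + b + c - ?m1 - ?m2)" by (simp only: e)
    have tt0: "theta a b c (theta a b c p) = word3 (a - ?m1) (b - ?m2) (c + ?m1 + ?m2)"
      unfolding t theta_word3[OF m] by simp
    have q1: "a - ?m1 = l1" "b - ?m2 = l2" "c + ?m1 + ?m2 = a + b + c - l1 - l2" using l True by simp_all
    have tt: "theta a b c (theta a b c p) = p" unfolding tt0 q1 by (rule p[symmetric])
    show ?thesis
    proof (intro conjI)
      show "theta a b c p \<in> dyck [a, b, c]" unfolding t by (rule word3_in_dyck[OF m])
      show "theta a b c (theta a b c p) = p" by (rule tt)
      show "area [a, b, c] p = depth [a, b, c] (theta a b c p)"
        unfolding t unfolding p using l True by (simp add: area_word3 depth_word3[OF m] of_nat_diff)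
      show "depth [a, b, c] p = area [a, b, c] (theta a b c p)"
        unfolding t unfolding p using l True by (simp add: area_word3 depth_word3[OF l] of_nat_diff)
    qed
  next
    case False
    let ?m1 = "a + b - l1 - l2" and ?m2 = "l2"
    have m: "?m1 \<le> a" "?m1 + ?m2 \<le> a + b" using l False by simp_all
    have e: "c + l1 = a + b + c - ?m1 - ?m2" using l False by simp
    have "theta a b c p = word3 ?m1 ?m2 (c + l1)"
      unfolding p theta_word3[OF l] using False by simp
    then have t: "theta a b c p = word3 ?m1 ?m2 (a + b + c - ?m1 - ?m2)" by (simp only: e)
    have tt0: "theta a b c (theta a b c p) = word3 (a + b - ?m1 - ?m2) ?m2 (c + ?m1)"
      unfolding t theta_word3[OF m] using False by simp
    have q1: "a + b - ?m1 - ?m2 = l1" "c + ?m1 = a + b + c - l1 - l2" using l False by simp_all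
    have tt: "theta a b c (theta a b c p) = p" unfolding tt0 q1 by (rule p[symmetric])
    show ?thesis
    proof (intro conjI)
      show "theta a b c p \<in> dyck [a, b, c]" unfolding t by (rule word3_in_dyck[OF m])
      show "theta a b c (theta a b c p) = p" by (rule tt)
      show "area [a, b, c] p = depth [a, b, c] (theta a b c p)"
        unfolding t depth_word3[OF m] unfolding p using l False by (simp add: area_word3 of_nat_diff)
      show "depth [a, b, c] p = area [a, b, c] (theta a b c p)"
        unfolding t area_word3 unfolding p depth_word3[OF l] using l False by (simp add: of_nat_diff)
    qed
  qed
qed

end
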